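(* Let $(X,\le,\ast)$ be a semiframe and $F\subseteq X$ a semifilter. Then $F$ is regular if and only if $F$ is weakly regular and strongly compatible.
   Context: A semiframe is a triple $(X,\le,\ast)$ where $(X,\le)$ is a complete join-semilattice ($\bot_X=\bigvee\varnothing$) and $\ast$ is a compatibility relation: commutative; $x\ast x$ for every $x\neq\bot_X$; and $x\ast\bigvee Y$ iff $x\ast y$ for some $y\in Y$. A semifilter is a nonempty, up-closed subset $F$ with $y\ast y'$ for all $y,y'\in F$ (compatible). For $F\subseteq X$ write $x\ast F$ when $x\ast y$ for all $y\in F$, and $F^\ast=\{x\in X\mid x\ast F\}$. $F$ is strongly compatible when $F^\ast$ is nonempty and compatible. An element $x$ is transitive when $x\neq\bot_X$ and $x'\ast x\ast x''$ implies $x'\ast x''$. The abstract community of $F$ is $\mathcal K(F)=\bigvee\{z\in X\mid \neg(z\ast c_F)\}$ where $c_F=\bigvee\{y\in X\mid \neg(y\ast F)\}$ (equivalently $\mathcal K(F)=\bigvee\{x\in X\mid x^\ast\subseteq F^\ast\}$ with $x^\ast=\{x'\mid x'\ast x\}$). $F$ is weakly regular when $\mathcal K(F)\in F$, and regular when $\mathcal K(F)\in F$ and $\mathcal K(F)$ is transitive. *)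

theory Defs
  imports Main
begin

text \<open>A semiframe on a carrier type 'a: the order is a complete join-semilattice,
which (having all joins) is a complete lattice; bottom is Sup {}.  The
compatibility relation is a binary predicate cmp.\<close>

definition semiframe :: "('a::complete_lattice \<Rightarrow> 'a \<Rightarrow> bool) \<Rightarrow> bool" where
  "semiframe cmp \<longleftrightarrow>
     (\<forall>x y. cmp x y \<longleftrightarrow> cmp y x) \<and>
     (\<forall>x. x \<noteq> Sup {} \<longrightarrow> cmp x x) \<and>
     (\<forall>x Y. cmp x (Sup Y) \<longleftrightarrow> (\<exists>y\<in>Y. cmp x y))"

definition compatible_set :: "('a \<Rightarrow> 'a \<Rightarrow> bool) \<Rightarrow> 'a set \<Rightarrow> bool" where
  "compatible_set cmp F \<longleftrightarrow> (\<forall>y\<in>F. \<forall>y'\<in>F. cmp y y')"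

definition semifilter :: "('a::complete_lattice \<Rightarrow> 'a \<Rightarrow> bool) \<Rightarrow> 'a set \<Rightarrow> bool" where
  "semifilter cmp F \<longleftrightarrow>
     F \<noteq> {} \<and> (\<forall>x y. x \<in> F \<longrightarrow> x \<le> y \<longrightarrow> y \<in> F) \<and> compatible_set cmp F"

definition comp_with_set :: "('a \<Rightarrow> 'a \<Rightarrow> bool) \<Rightarrow> 'a \<Rightarrow> 'a set \<Rightarrow> bool" where
  "comp_with_set cmp x F \<longleftrightarrow> (\<forall>y\<in>F. cmp x y)"

definition star_set :: "('a \<Rightarrow> 'a \<Rightarrow> bool) \<Rightarrow> 'a set \<Rightarrow> 'a set" where
  "star_set cmp F = {x. comp_with_set cmp x F}"

definition strongly_compatible :: "('a \<Rightarrow> 'a \<Rightarrow> bool) \<Rightarrow> 'a set \<Rightarrow> bool" where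
  "strongly_compatible cmp F \<longleftrightarrow>
     star_set cmp F \<noteq> {} \<and> compatible_set cmp (star_set cmp F)"

definition transitive_elem :: "('a::complete_lattice \<Rightarrow> 'a \<Rightarrow> bool) \<Rightarrow> 'a \<Rightarrow> bool" where
  "transitive_elem cmp x \<longleftrightarrow>
     x \<noteq> Sup {} \<and> (\<forall>x' x''. cmp x' x \<and> cmp x x'' \<longrightarrow> cmp x' x'')"

definition cF :: "('a::complete_lattice \<Rightarrow> 'a \<Rightarrow> bool) \<Rightarrow> 'a set \<Rightarrow> 'a" where
  "cF cmp F = Sup {y. \<not> comp_with_set cmp y F}"

definition community :: "('a::complete_lattice \<Rightarrow> 'a \<Rightarrow> bool) \<Rightarrow> 'a set \<Rightarrow> 'a" where
  "community cmp F = Sup {z. \<not> cmp z (cF cmp F)}"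

definition weakly_regular :: "('a::complete_lattice \<Rightarrow> 'a \<Rightarrow> bool) \<Rightarrow> 'a set \<Rightarrow> bool" where
  "weakly_regular cmp F \<longleftrightarrow> community cmp F \<in> F"

definition regular :: "('a::complete_lattice \<Rightarrow> 'a \<Rightarrow> bool) \<Rightarrow> 'a set \<Rightarrow> bool" where
  "regular cmp F \<longleftrightarrow> community cmp F \<in> F \<and> transitive_elem cmp (community cmp F)"

end

theory Submission
  imports Defs
begin

lemma sf_sym: "semiframe cmp \<Longrightarrow> cmp x y \<longleftrightarrow> cmp y x" unfolding semiframe_def by metis
lemma sf_sup: "semiframe cmp \<Longrightarrow> cmp x (Sup Y) \<longleftrightarrow> (\<exists>y\<in>Y. cmp x y)" unfolding semiframe_def by metis
lemma sf_bot: "semiframe cmp \<Longrightarrow> \<not> cmp x (Sup {})" using sf_sup[of cmp x "{}"] by simp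

lemma star_of_community:
  assumes sf: "semiframe cmp" and w: "cmp w (community cmp F)"
  shows "w \<in> star_set cmp F"
proof -
  from w obtain z where z: "\<not> cmp z (cF cmp F)" "cmp w z"
    unfolding community_def using sf_sup[OF sf, of w "{z. \<not> cmp z (cF cmp F)}"] by auto
  have zw: "cmp z w" using z(2) sf_sym[OF sf] by metis
  have "comp_with_set cmp w F"
  proof (rule ccontr)
    assume "\<not> comp_with_set cmp w F"
    hence "cmp z (cF cmp F)" using zw sf_sup[OF sf, of z "{y. \<not> comp_with_set cmp y F}"]
      unfolding cF_def by auto
    thus False using z(1) by simp
  qed
  then show ?thesis unfolding star_set_def by simp
qed

theorem theorem9p29:
  fixes cmp :: "'a::complete_lattice \<Rightarrow> 'a \<Rightarrow> bool"
    and F :: "'a set"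
  assumes "semiframe cmp"
    and "semifilter cmp F"
  shows "regular cmp F \<longleftrightarrow> weakly_regular cmp F \<and> strongly_compatible cmp F"
proof -
  have cF: "compatible_set cmp F" using assms(2) unfolding semifilter_def by simp
  let ?K = "community cmp F"
  show ?thesis
  proof
    assume r: "regular cmp F"
    hence KF: "?K \<in> F" and tr: "transitive_elem cmp ?K" unfolding regular_def by auto
    have "?K \<in> star_set cmp F" using KF cF unfolding star_set_def comp_with_set_def compatible_set_def by simp
    moreover have "compatible_set cmp (star_set cmp F)"
      unfolding compatible_set_def
    proof (intro ballI)
      fix x x' assume x: "x \<in> star_set cmp F" and x': "x' \<in> star_set cmp F"
      have "cmp x ?K" "cmp x' ?K" using x x' KF unfolding star_set_def comp_with_set_def by auto
      hence "cmp x ?K" "cmp ?K x'" using sf_sym[OF assms(1)] by metis+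
      thus "cmp x x'" using tr unfolding transitive_elem_def by metis
    qed
    ultimately show "weakly_regular cmp F \<and> strongly_compatible cmp F"
      using KF unfolding weakly_regular_def strongly_compatible_def by auto
  next
    assume a: "weakly_regular cmp F \<and> strongly_compatible cmp F"
    hence KF: "?K \<in> F" and sc: "compatible_set cmp (star_set cmp F)"
      unfolding weakly_regular_def strongly_compatible_def by auto
    have "cmp ?K ?K" using KF cF unfolding compatible_set_def by simp
    hence ne: "?K \<noteq> Sup {}" using sf_bot[OF assms(1)] by metis
    have "\<forall>x' x''. cmp x' ?K \<and> cmp ?K x'' \<longrightarrow> cmp x' x''"
    proof (intro allI impI)
      fix x' x'' assume h: "cmp x' ?K \<and> cmp ?K x''"
      have "x' \<in> star_set cmp F" using h star_of_community[OF assms(1)] by simp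
      moreover have "cmp x'' ?K" using h sf_sym[OF assms(1)] by metis
      hence "x'' \<in> star_set cmp F" using star_of_community[OF assms(1)] by simp
      ultimately show "cmp x' x''" using sc unfolding compatible_set_def by simp
    qed
    hence "transitive_elem cmp ?K" using ne unfolding transitive_elem_def by (intro conjI)
    thus "regular cmp F" using KF unfolding regular_def by (intro conjI)
  qed
qed

end
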